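(* Let $n\ge 0$, $k\ge1$ be integers. Let $\mathcal A$ be any (deterministic) algorithm that, given oracle access to an arbitrary feasibility function $f:\{0,\dots,n\}^k\to\{\mathbf{true},\mathbf{false}\}$, terminates and outputs exactly the set $P$ of Pareto points of $f$. Then for every feasibility function $f$, the run of $\mathcal A$ on $f$ evaluates $f$ at every co-Pareto point of $f$ (the co-Pareto front induced by $P$).
   Context: For $\vec x,\vec x'\in\{0,\dots,n\}^k$, $\vec x\le_k\vec x'$ iff $x_i\le x'_i$ for all $i$; $\vec x$ is smaller than $\vec x'$ (and $\vec x'$ greater than $\vec x$) if $\vec x\le_k\vec x'$ and $\vec x\neq\vec x'$. A feasibility function is a monotone $f:\{0,\dots,n\}^k\to\{\mathbf{true},\mathbf{false}\}$: if $f(\vec x)=\mathbf{true}$ then $f(\vec x')=\mathbf{true}$ for all $\vec x'$ greater than $\vec x$. A Pareto point of $f$ is an $\vec x$ with $f(\vec x)=\mathbf{true}$ and $f(\vec x')=\mathbf{false}$ for all $\vec x'$ smaller than $\vec x$. A co-Pareto point of $f$ is an $\vec x$ with $f(\vec x)=\mathbf{false}$ and $f(\vec x')=\mathbf{true}$ for all $\vec x'$ greater than $\vec x$. The algorithm accesses $f$ only through queries returning $f(\vec x)$ for chosen points $\vec x$. *)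

theory Defs
  imports Main
begin

definition grid :: "nat \<Rightarrow> nat \<Rightarrow> nat list set" where
  "grid n k = {x. length x = k \<and> (\<forall>i<k. x ! i \<le> n)}"

definition le_k :: "nat \<Rightarrow> nat list \<Rightarrow> nat list \<Rightarrow> bool" where
  "le_k k x x' \<longleftrightarrow> (\<forall>i<k. x ! i \<le> x' ! i)"

definition smaller :: "nat \<Rightarrow> nat list \<Rightarrow> nat list \<Rightarrow> bool" where
  "smaller k x x' \<longleftrightarrow> le_k k x x' \<and> x \<noteq> x'"

text \<open>A feasibility function: monotone on the grid (values outside the grid are irrelevant).\<close>
definition feasibility :: "nat \<Rightarrow> nat \<Rightarrow> (nat list \<Rightarrow> bool) \<Rightarrow> bool" where
  "feasibility n k f \<longleftrightarrow>
     (\<forall>x\<in>grid n k. \<forall>x'\<in>grid n k. f x \<and> smaller k x x' \<longrightarrow> f x')"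

definition pareto_points :: "nat \<Rightarrow> nat \<Rightarrow> (nat list \<Rightarrow> bool) \<Rightarrow> nat list set" where
  "pareto_points n k f =
     {x\<in>grid n k. f x \<and> (\<forall>x'\<in>grid n k. smaller k x' x \<longrightarrow> \<not> f x')}"

definition copareto_points :: "nat \<Rightarrow> nat \<Rightarrow> (nat list \<Rightarrow> bool) \<Rightarrow> nat list set" where
  "copareto_points n k f =
     {x\<in>grid n k. \<not> f x \<and> (\<forall>x'\<in>grid n k. smaller k x x' \<longrightarrow> f x')}"

text \<open>Deterministic oracle algorithms are modelled as (well-founded, hence always
terminating) adaptive decision trees: a node queries f at a point and continues
depending on the answer; a leaf outputs a set of points.\<close>
datatype 'p qtree = Output "'p set" | Query 'p "bool \<Rightarrow> 'p qtree"

primrec run :: "('p \<Rightarrow> bool) \<Rightarrow> 'p qtree \<Rightarrow> 'p set" where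
  "run f (Output S) = S"
| "run f (Query x c) = run f (c (f x))"

primrec queried :: "('p \<Rightarrow> bool) \<Rightarrow> 'p qtree \<Rightarrow> 'p set" where
  "queried f (Output S) = {}"
| "queried f (Query x c) = insert x (queried f (c (f x)))"

end

theory Submission
  imports Defs
begin

lemma run_agree:
  "(\<forall>y\<in>queried f T. g y = f y) \<Longrightarrow> run g T = run f T"
  by (induction T) auto

theorem lemma6:
  fixes n k :: nat and A :: "nat list qtree"
  assumes "k \<ge> 1"
    and correct: "\<forall>g. feasibility n k g \<longrightarrow> run g A = pareto_points n k g"
    and "feasibility n k f"
  shows "copareto_points n k f \<subseteq> queried f A"
proof
  fix x assume xc: "x \<in> copareto_points n k f"
  show "x \<in> queried f A"
  proof (rule ccontr)
    assume nq: "x \<notin> queried f A"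
    define g where "g = f(x := True)"
    have xg: "x \<in> grid n k" and fx: "\<not> f x"
      and up: "\<forall>x'\<in>grid n k. smaller k x x' \<longrightarrow> f x'"
      using xc by (auto simp: copareto_points_def)
    have below: "\<not> f y" if "y \<in> grid n k" "smaller k y x" for y
      using assms(3) that xg fx unfolding feasibility_def by blast
    have feas: "feasibility n k g"
      unfolding feasibility_def g_def
    proof (intro ballI impI)
      fix y y' assume yg: "y \<in> grid n k" and y'g: "y' \<in> grid n k"
        and h: "(f(x := True)) y \<and> smaller k y y'"
      show "(f(x := True)) y'"
      proof (cases "y = x")
        case True
        then have "smaller k x y'" using h by simp
        then have "f y'" using up y'g by blast
        then show ?thesis by simp
      next
        case False
        then have fy: "f y" using h by simp
        show ?thesis
        proof (cases "y' = x")
          case True then show ?thesis by simp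
        next
          case False2: False
          have "smaller k y y'" using h by simp
          then have "f y'" using assms(3) fy yg y'g unfolding feasibility_def by blast
          then show ?thesis by simp
        qed
      qed
    qed
    have "run g A = run f A"
      using nq by (intro run_agree) (auto simp: g_def)
    then have "pareto_points n k g = pareto_points n k f"
      using correct feas assms(3) by metis
    moreover have "x \<in> pareto_points n k g"
    proof -
      have "\<forall>x'\<in>grid n k. smaller k x' x \<longrightarrow> \<not> g x'"
      proof (intro ballI impI)
        fix x' assume "x' \<in> grid n k" "smaller k x' x"
        moreover then have "x' \<noteq> x" by (simp add: smaller_def)
        ultimately show "\<not> g x'" using below by (simp add: g_def)
      qed
      then show ?thesis using xg by (simp add: pareto_points_def g_def)
    qed
    moreover have "x \<notin> pareto_points n k f"
      using fx by (simp add: pareto_points_def)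
    ultimately show False by simp
  qed
qed

end
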